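(* Let $\mathbf{H}$ be any one of the four history systems $\mathbf{G3N}^{Hist}$, $\mathbf{G3NeF}^{Hist}$, $\mathbf{G3CoPC}^{Hist}$, $\mathbf{G3MPC}^{Hist}$. Backward proof search in $\mathbf{H}$ terminates: there is no infinite sequence $S_0,S_1,S_2,\dots$ of history sequents such that, for every $i$, $S_{i+1}$ is a premise of some instance of a rule of $\mathbf{H}$ whose conclusion is $S_i$.
   Context: Formulas are generated from a countable set of propositional variables $p,q,\dots$ and the constant $\top$ by the grammar $\varphi::= p\mid\top\mid\varphi\wedge\varphi\mid\varphi\vee\varphi\mid\varphi\to\varphi\mid\neg\varphi$ (there is no constant $\bot$). A history sequent is an expression $\mathcal H\mid\Gamma\Rightarrow\varphi$ where $\mathcal H$ (the history) is a finite set of formulas, $\Gamma$ is a finite multiset of formulas and $\varphi$ is a formula (the goal). $(\psi,\mathcal H)$ denotes $\mathcal H\cup\{\psi\}$, $\emptyset$ is the empty history, $\Gamma,\alpha$ denotes $\Gamma$ with one more occurrence of $\alpha$, and "$\alpha\in\Gamma$" means $\alpha$ occurs in $\Gamma$. History rules ($p$ a propositional variable; side conditions after "if"): (ax) $\mathcal H\mid\Gamma,p\Rightarrow p$; ($\top$) $\mathcal H\mid\Gamma\Rightarrow\top$; ($\to$r$_1$) from $\emptyset\mid\Gamma,\alpha\Rightarrow\beta$ infer $\mathcal H\mid\Gamma\Rightarrow\alpha\to\beta$, if $\alpha\notin\Gamma$; ($\to$r$_2$) from $\mathcal H\mid\Gamma\Rightarrow\beta$ infer $\mathcal H\mid\Gamma\Rightarrow\alpha\to\beta$,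 if $\alpha\in\Gamma$; ($\to$l) from $(\varphi,\mathcal H)\mid\Gamma,\alpha\to\beta\Rightarrow\alpha$ and $\emptyset\mid\Gamma,\alpha\to\beta,\beta\Rightarrow\varphi$ infer $\mathcal H\mid\Gamma,\alpha\to\beta\Rightarrow\varphi$, if $\varphi\notin\mathcal H$ and $\beta\notin\Gamma$; ($\wedge$r) from $\mathcal H\mid\Gamma\Rightarrow\alpha$ and $\mathcal H\mid\Gamma\Rightarrow\beta$ infer $\mathcal H\mid\Gamma\Rightarrow\alpha\wedge\beta$; ($\wedge$l$_1$) from $\emptyset\mid\Gamma,\alpha\wedge\beta,\alpha\Rightarrow\varphi$ infer $\mathcal H\mid\Gamma,\alpha\wedge\beta\Rightarrow\varphi$, if $\alpha\notin\Gamma$; ($\wedge$l$_2$) from $\emptyset\mid\Gamma,\alpha\wedge\beta,\beta\Rightarrow\varphi$ infer $\mathcal H\mid\Gamma,\alpha\wedge\beta\Rightarrow\varphi$, if $\beta\notin\Gamma$; ($\vee$r$_1$), ($\vee$r$_2$) from $\mathcal H\mid\Gamma\Rightarrow\alpha$ (resp. $\mathcal H\mid\Gamma\Rightarrow\beta$) infer $\mathcal H\mid\Gamma\Rightarrow\alpha\vee\beta$; ($\vee$l) from $\emptyset\mid\Gamma,\alpha\vee\beta,\alpha\Rightarrow\varphi$ and $\emptyset\mid\Gamma,\alpha\vee\beta,\beta\Rightarrow\varphi$ infer $\mathcal H\mid\Gamma,\alpha\vee\beta\Rightarrow\varphi$, if $\alpha,\beta\notin\Gamma$; (n$_1$) from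 $\emptyset\mid\Gamma,\neg\alpha,\beta\Rightarrow\alpha$ and $\emptyset\mid\Gamma,\neg\alpha,\alpha\Rightarrow\beta$ infer $\mathcal H\mid\Gamma,\neg\alpha\Rightarrow\neg\beta$, if $\beta\notin\Gamma\cup\{\neg\alpha\}$ and $\alpha\notin\Gamma$; (n$_2$) from $\emptyset\mid\Gamma,\neg\alpha,\beta\Rightarrow\alpha$ and $\mathcal H\mid\Gamma,\neg\alpha\Rightarrow\beta$ infer $\mathcal H\mid\Gamma,\neg\alpha\Rightarrow\neg\beta$, if $\beta\notin\Gamma\cup\{\neg\alpha\}$ and $\alpha\in\Gamma$; (n$_3$) from $(\neg\beta,\mathcal H)\mid\Gamma,\neg\alpha\Rightarrow\alpha$ and $\emptyset\mid\Gamma,\neg\alpha,\alpha\Rightarrow\beta$ infer $\mathcal H\mid\Gamma,\neg\alpha\Rightarrow\neg\beta$, if $\neg\beta\notin\mathcal H$, $\beta\in\Gamma\cup\{\neg\alpha\}$ and $\alpha\notin\Gamma$; (n$_4$) from $(\neg\beta,\mathcal H)\mid\Gamma,\neg\alpha\Rightarrow\alpha$ and $\mathcal H\mid\Gamma,\neg\alpha\Rightarrow\beta$ infer $\mathcal H\mid\Gamma,\neg\alpha\Rightarrow\neg\beta$, if $\neg\beta\notin\mathcal H$, $\beta\in\Gamma\cup\{\neg\alpha\}$ and $\alpha\in\Gamma$; (nef) from $(\neg\beta,\mathcal H)\mid\Gamma,\neg\alpha\Rightarrow\alpha$ infer $\mathcal H\mid\Gamma,\neg\alpha\Rightarrow\neg\beta$,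 if $\neg\beta\notin\mathcal H$; (copc$_1$) from $\emptyset\mid\Gamma,\neg\alpha,\beta\Rightarrow\alpha$ infer $\mathcal H\mid\Gamma,\neg\alpha\Rightarrow\neg\beta$, if $\beta\notin\Gamma\cup\{\neg\alpha\}$; (copc$_2$) from $(\neg\beta,\mathcal H)\mid\Gamma,\neg\alpha\Rightarrow\alpha$ infer $\mathcal H\mid\Gamma,\neg\alpha\Rightarrow\neg\beta$, if $\neg\beta\notin\mathcal H$ and $\beta\in\Gamma\cup\{\neg\alpha\}$; (an) from $\emptyset\mid\Gamma,\alpha\Rightarrow\neg\alpha$ infer $\mathcal H\mid\Gamma\Rightarrow\neg\alpha$, if $\alpha\notin\Gamma$. In addition, the left rules ($\to$l), ($\wedge$l$_1$), ($\wedge$l$_2$), ($\vee$l) may only be applied when the goal $\varphi$ of the conclusion is a propositional variable, a negation or a disjunction. The positive history rules are (ax) through ($\vee$l). The four history systems are: $\mathbf{G3N}^{Hist}$ = positive history rules + (n$_1$)–(n$_4$); $\mathbf{G3NeF}^{Hist}$ = positive history rules + (n$_1$)–(n$_4$) + (nef); $\mathbf{G3CoPC}^{Hist}$ = positive history rules + (copc$_1$), (copc$_2$); $\mathbf{G3MPC}^{Hist}$ = positive history rules + (copc$_1$), (copc$_2$), (an). A derivation is a finite tree of rule instances whose leaves are instances of (ax) or ($\top$). *)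

theory Defs
  imports "HOL-Library.Multiset"
begin

datatype fm = Var nat | Top | And fm fm | Or fm fm | Imp fm fm | Neg fm

(* History sequent  H | Gamma => phi : history (finite set), antecedent (multiset), goal *)
type_synonym hseq = "fm set \<times> fm multiset \<times> fm"

datatype hsys = G3N | G3NeF | G3CoPC | G3MPC

definition has_n :: "hsys \<Rightarrow> bool" where
  "has_n s \<longleftrightarrow> s = G3N \<or> s = G3NeF"
definition has_nef :: "hsys \<Rightarrow> bool" where
  "has_nef s \<longleftrightarrow> s = G3NeF"
definition has_copc :: "hsys \<Rightarrow> bool" where
  "has_copc s \<longleftrightarrow> s = G3CoPC \<or> s = G3MPC"
definition has_an :: "hsys \<Rightarrow> bool" where
  "has_an s \<longleftrightarrow> s = G3MPC"

fun left_goal :: "fm \<Rightarrow> bool" where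
  "left_goal (Var p) = True"
| "left_goal (Neg a) = True"
| "left_goal (Or a b) = True"
| "left_goal _ = False"

(* prem s S' S : S' is a premise of some instance of a rule of system s whose conclusion is S.
   (ax) and (top) have no premises and hence contribute no steps. *)
inductive prem :: "hsys \<Rightarrow> hseq \<Rightarrow> hseq \<Rightarrow> bool" for s where
  impR1: "a \<notin># G \<Longrightarrow> prem s ({}, G + {#a#}, b) (H, G, Imp a b)"
| impR2: "a \<in># G \<Longrightarrow> prem s (H, G, b) (H, G, Imp a b)"
| impL1: "\<lbrakk>phi \<notin> H; b \<notin># G; left_goal phi\<rbrakk> \<Longrightarrow>
     prem s (insert phi H, G + {#Imp a b#}, a) (H, G + {#Imp a b#}, phi)"
| impL2: "\<lbrakk>phi \<notin> H; b \<notin># G; left_goal phi\<rbrakk> \<Longrightarrow>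
     prem s ({}, G + {#Imp a b#} + {#b#}, phi) (H, G + {#Imp a b#}, phi)"
| andR1: "prem s (H, G, a) (H, G, And a b)"
| andR2: "prem s (H, G, b) (H, G, And a b)"
| andL1: "\<lbrakk>a \<notin># G; left_goal phi\<rbrakk> \<Longrightarrow>
     prem s ({}, G + {#And a b#} + {#a#}, phi) (H, G + {#And a b#}, phi)"
| andL2: "\<lbrakk>b \<notin># G; left_goal phi\<rbrakk> \<Longrightarrow>
     prem s ({}, G + {#And a b#} + {#b#}, phi) (H, G + {#And a b#}, phi)"
| orR1: "prem s (H, G, a) (H, G, Or a b)"
| orR2: "prem s (H, G, b) (H, G, Or a b)"
| orL1: "\<lbrakk>a \<notin># G; b \<notin># G; left_goal phi\<rbrakk> \<Longrightarrow>
     prem s ({}, G + {#Or a b#} + {#a#}, phi) (H, G + {#Or a b#}, phi)"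
| orL2: "\<lbrakk>a \<notin># G; b \<notin># G; left_goal phi\<rbrakk> \<Longrightarrow>
     prem s ({}, G + {#Or a b#} + {#b#}, phi) (H, G + {#Or a b#}, phi)"
| n1a: "\<lbrakk>has_n s; b \<notin># G; b \<noteq> Neg a; a \<notin># G\<rbrakk> \<Longrightarrow>
     prem s ({}, G + {#Neg a#} + {#b#}, a) (H, G + {#Neg a#}, Neg b)"
| n1b: "\<lbrakk>has_n s; b \<notin># G; b \<noteq> Neg a; a \<notin># G\<rbrakk> \<Longrightarrow>
     prem s ({}, G + {#Neg a#} + {#a#}, b) (H, G + {#Neg a#}, Neg b)"
| n2a: "\<lbrakk>has_n s; b \<notin># G; b \<noteq> Neg a; a \<in># G\<rbrakk> \<Longrightarrow>
     prem s ({}, G + {#Neg a#} + {#b#}, a) (H, G + {#Neg a#}, Neg b)"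
| n2b: "\<lbrakk>has_n s; b \<notin># G; b \<noteq> Neg a; a \<in># G\<rbrakk> \<Longrightarrow>
     prem s (H, G + {#Neg a#}, b) (H, G + {#Neg a#}, Neg b)"
| n3a: "\<lbrakk>has_n s; Neg b \<notin> H; b \<in># G \<or> b = Neg a; a \<notin># G\<rbrakk> \<Longrightarrow>
     prem s (insert (Neg b) H, G + {#Neg a#}, a) (H, G + {#Neg a#}, Neg b)"
| n3b: "\<lbrakk>has_n s; Neg b \<notin> H; b \<in># G \<or> b = Neg a; a \<notin># G\<rbrakk> \<Longrightarrow>
     prem s ({}, G + {#Neg a#} + {#a#}, b) (H, G + {#Neg a#}, Neg b)"
| n4a: "\<lbrakk>has_n s; Neg b \<notin> H; b \<in># G \<or> b = Neg a; a \<in># G\<rbrakk> \<Longrightarrow>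
     prem s (insert (Neg b) H, G + {#Neg a#}, a) (H, G + {#Neg a#}, Neg b)"
| n4b: "\<lbrakk>has_n s; Neg b \<notin> H; b \<in># G \<or> b = Neg a; a \<in># G\<rbrakk> \<Longrightarrow>
     prem s (H, G + {#Neg a#}, b) (H, G + {#Neg a#}, Neg b)"
| nef: "\<lbrakk>has_nef s; Neg b \<notin> H\<rbrakk> \<Longrightarrow>
     prem s (insert (Neg b) H, G + {#Neg a#}, a) (H, G + {#Neg a#}, Neg b)"
| copc1: "\<lbrakk>has_copc s; b \<notin># G; b \<noteq> Neg a\<rbrakk> \<Longrightarrow>
     prem s ({}, G + {#Neg a#} + {#b#}, a) (H, G + {#Neg a#}, Neg b)"
| copc2: "\<lbrakk>has_copc s; Neg b \<notin> H; b \<in># G \<or> b = Neg a\<rbrakk> \<Longrightarrow>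
     prem s (insert (Neg b) H, G + {#Neg a#}, a) (H, G + {#Neg a#}, Neg b)"
| an: "\<lbrakk>has_an s; a \<notin># G\<rbrakk> \<Longrightarrow>
     prem s ({}, G + {#a#}, Neg a) (H, G, Neg a)"

end

theory Submission
  imports Defs
begin

fun subf :: "fm \<Rightarrow> fm set" where
  "subf (Var p) = {Var p}"
| "subf Top = {Top}"
| "subf (And a b) = insert (And a b) (subf a \<union> subf b)"
| "subf (Or a b) = insert (Or a b) (subf a \<union> subf b)"
| "subf (Imp a b) = insert (Imp a b) (subf a \<union> subf b)"
| "subf (Neg a) = insert (Neg a) (subf a)"

lemma finite_subf: "finite (subf x)"
  by (induction x) auto

lemma self_subf: "x \<in> subf x"
  by (cases x) auto

definition closed :: "fm set \<Rightarrow> bool" where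
  "closed U \<longleftrightarrow> (\<forall>x\<in>U. subf x \<subseteq> U)"

lemma closed_And: "closed U \<Longrightarrow> And a b \<in> U \<Longrightarrow> a \<in> U \<and> b \<in> U"
  unfolding closed_def using self_subf by fastforce
lemma closed_Or: "closed U \<Longrightarrow> Or a b \<in> U \<Longrightarrow> a \<in> U \<and> b \<in> U"
  unfolding closed_def using self_subf by fastforce
lemma closed_Imp: "closed U \<Longrightarrow> Imp a b \<in> U \<Longrightarrow> a \<in> U \<and> b \<in> U"
  unfolding closed_def using self_subf by fastforce
lemma closed_Neg: "closed U \<Longrightarrow> Neg a \<in> U \<Longrightarrow> a \<in> U"
  unfolding closed_def using self_subf by fastforce

lemma subf_trans: "y \<in> subf x \<Longrightarrow> subf y \<subseteq> subf x"
  by (induction x) auto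

lemma neq1: "Imp a b \<noteq> b" "And a b \<noteq> a" "And a b \<noteq> b" "Or a b \<noteq> a" "Or a b \<noteq> b"
  "Neg a \<noteq> a"
proof -
  have "size (Imp a b) > size b" "size (And a b) > size a" "size (And a b) > size b"
    "size (Or a b) > size a" "size (Or a b) > size b" "size (Neg a) > size a" by auto
  thus "Imp a b \<noteq> b" "And a b \<noteq> a" "And a b \<noteq> b" "Or a b \<noteq> a" "Or a b \<noteq> b"
  "Neg a \<noteq> a" by auto
qed

lemma ins_eq: "(insert x A = insert y (insert x A)) \<longleftrightarrow> y = x \<or> y \<in> A"
  by auto

definition step_ok :: "fm set \<Rightarrow> hseq \<Rightarrow> hseq \<Rightarrow> bool" where
  "step_ok U S' S \<longleftrightarrow> set_mset (fst (snd S)) \<subset> set_mset (fst (snd S')) \<or>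
     (fst (snd S') = fst (snd S) \<and> (fst S \<inter> U \<subset> fst S' \<inter> U \<or>
        (fst S' = fst S \<and> size (snd (snd S')) < size (snd (snd S)))))"

lemma step:
  assumes "prem s S' S" "closed U" "set_mset (fst (snd S)) \<subseteq> U" "snd (snd S) \<in> U"
  shows "set_mset (fst (snd S')) \<subseteq> U \<and> snd (snd S') \<in> U \<and> step_ok U S' S"
  using assms
proof (induction rule: prem.induct)
qed (auto simp: step_ok_def neq1 neq1[symmetric] ins_eq dest: closed_And closed_Or closed_Imp closed_Neg)

lemma closed_U: "closed (subf g \<union> \<Union> (subf ` A))"
  unfolding closed_def using subf_trans by blast

lemma card_dec: "finite U \<Longrightarrow> A \<subset> B \<Longrightarrow> B \<subseteq> U \<Longrightarrow> card U - card B < card U - card A"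
proof -
  assume a: "finite U" "A \<subset> B" "B \<subseteq> U"
  hence "card A < card B" by (meson psubset_card_mono rev_finite_subset)
  moreover have "card B \<le> card U" using a card_mono by blast
  ultimately show ?thesis by linarith
qed

definition meas :: "fm set \<Rightarrow> hseq \<Rightarrow> nat \<times> nat \<times> nat" where
  "meas U S = (card U - card (set_mset (fst (snd S))), card U - card (fst S \<inter> U), size (snd (snd S)))"

lemma step_ok_lex:
  assumes "finite U" "step_ok U S' S" "set_mset (fst (snd S')) \<subseteq> U"
  shows "(meas U S', meas U S) \<in> less_than <*lex*> less_than <*lex*> less_than"
  using assms card_dec[OF assms(1)] unfolding step_ok_def meas_def
  by (auto simp: in_lex_prod)

theorem theorem5p5:
  fixes s :: hsys
  shows "\<not> (\<exists>S :: nat \<Rightarrow> hseq. (\<forall>i. finite (fst (S i))) \<and> (\<forall>i. prem s (S (Suc i)) (S i)))"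
proof
  assume "\<exists>S :: nat \<Rightarrow> hseq. (\<forall>i. finite (fst (S i))) \<and> (\<forall>i. prem s (S (Suc i)) (S i))"
  then obtain S :: "nat \<Rightarrow> hseq" where P: "\<And>i. prem s (S (Suc i)) (S i)" by blast
  define U where "U = subf (snd (snd (S 0))) \<union> \<Union> (subf ` set_mset (fst (snd (S 0))))"
  have cU: "closed U" unfolding U_def by (rule closed_U)
  have fU: "finite U" unfolding U_def by (simp add: finite_subf)
  have inv: "set_mset (fst (snd (S i))) \<subseteq> U \<and> snd (snd (S i)) \<in> U" for i
  proof (induction i)
    case 0
    then show ?case unfolding U_def using self_subf by blast
  next
    case (Suc i)
    then show ?case using step[OF P cU] by blast
  qed
  have "(meas U (S (Suc i)), meas U (S i)) \<in> less_than <*lex*> less_than <*lex*> less_than" for i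
    using step[OF P cU] inv step_ok_lex[OF fU] by blast
  hence "\<forall>i. (S (Suc i), S i) \<in> inv_image (less_than <*lex*> less_than <*lex*> less_than) (meas U)"
    by simp
  moreover have "wf (inv_image (less_than <*lex*> less_than <*lex*> less_than) (meas U))"
    by (intro wf_inv_image wf_lex_prod wf_less_than)
  ultimately show False using wf_iff_no_infinite_down_chain by blast
qed

end
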